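(* Let $G$ be a finite two-player zero-sum game with finite pure strategy sets $S_1,S_2$ and payoffs $v_1=-v_2$, extended bilinearly to mixed strategies, and let $\epsilon\ge 0$. Consider RM-BR DO: populations $\Pi^t_1\subseteq S_1$, $\Pi^t_2\subseteq S_2$ are maintained, starting from nonempty $\Pi^0_i$; at iteration $t$ a restricted profile $\pi^t=(\pi^t_1,\pi^t_2)$ with $\pi^t_i\in\Delta(\Pi^t_i)$ is computed (by regret minimization of player $i$ over $\Pi^t_i$ against best responses of the unrestricted opponent), and then for each $i$ a pure best response of player $i$ to $\pi^t_{-i}$ is added, $\Pi^{t+1}_i=\Pi^t_i\cup\{\beta_i\}$. Assume that in each iteration enough inner-loop updates are run that the exploitability in each restricted game is at most $\epsilon$, i.e. for each $i$ and $t$, $$\min_{\sigma_{-i}\in\Delta(S_{-i})}v_i(\pi^t_i,\sigma_{-i})\ \ge\ \max_{\sigma_i\in\Delta(\Pi^t_i)}\min_{\sigma_{-i}\in\Delta(S_{-i})}v_i(\sigma_i,\sigma_{-i})-\epsilon .$$ Then the exploitability never increases by more than $2\epsilon$ from one iteration to the next: $e(\pi^{t+1})\le e(\pi^t)+2\epsilon$ for every $t$.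
   Context: $\Delta(X)$ denotes the set of mixed strategies supported on the set $X$ of pure strategies. The exploitability of a profile $\pi=(\pi_1,\pi_2)$ is $e(\pi)=\sum_{i\in\{1,2\}}\max_{\pi_i'}v_i(\pi_i',\pi_{-i})$, maximizing over all mixed strategies of player $i$ in the full game. A best response of player $i$ to $\pi_{-i}$ is a strategy maximizing $v_i(\cdot,\pi_{-i})$. *)

theory Defs
  imports Complex_Main
begin

definition mixed :: "'a set \<Rightarrow> ('a \<Rightarrow> real) set" where
  "mixed X = {p. (\<forall>x. 0 \<le> p x) \<and> (\<forall>x. x \<notin> X \<longrightarrow> p x = 0) \<and> sum p X = 1}"

definition pure :: "'a \<Rightarrow> ('a \<Rightarrow> real)" where
  "pure a = (\<lambda>x. if x = a then 1 else 0)"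

definition payoff1 :: "'a set \<Rightarrow> 'b set \<Rightarrow> ('a \<Rightarrow> 'b \<Rightarrow> real)
    \<Rightarrow> ('a \<Rightarrow> real) \<Rightarrow> ('b \<Rightarrow> real) \<Rightarrow> real" where
  "payoff1 S1 S2 u p q = (\<Sum>a\<in>S1. \<Sum>b\<in>S2. p a * q b * u a b)"

definition payoff2 :: "'a set \<Rightarrow> 'b set \<Rightarrow> ('a \<Rightarrow> 'b \<Rightarrow> real)
    \<Rightarrow> ('a \<Rightarrow> real) \<Rightarrow> ('b \<Rightarrow> real) \<Rightarrow> real" where
  "payoff2 S1 S2 u p q = - payoff1 S1 S2 u p q"

definition exploitability :: "'a set \<Rightarrow> 'b set \<Rightarrow> ('a \<Rightarrow> 'b \<Rightarrow> real)
    \<Rightarrow> ('a \<Rightarrow> real) \<Rightarrow> ('b \<Rightarrow> real) \<Rightarrow> real" where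
  "exploitability S1 S2 u p q =
     (SUP s\<in>mixed S1. payoff1 S1 S2 u s q) + (SUP s\<in>mixed S2. payoff2 S1 S2 u p s)"

end

theory Submission
  imports Defs
begin

lemma mixed_mono:
  assumes "finite Y" "X \<subseteq> Y" "p \<in> mixed X"
  shows "p \<in> mixed Y"
proof -
  have "sum p Y = sum p X"
    using assms by (intro sum.mono_neutral_right) (auto simp: mixed_def)
  then show ?thesis using assms by (auto simp: mixed_def)
qed

lemma mixed_le1:
  assumes "finite X" "p \<in> mixed X"
  shows "p a \<le> 1"
proof (cases "a \<in> X")
  case True
  have "p a \<le> sum p X"
    using assms True by (intro member_le_sum) (auto simp: mixed_def)
  then show ?thesis using assms by (auto simp: mixed_def)
next
  case False then show ?thesis using assms by (auto simp: mixed_def)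
qed

lemma payoff_bound:
  assumes "finite S1" "finite S2" "p \<in> mixed S1" "q \<in> mixed S2"
  shows "\<bar>payoff1 S1 S2 u p q\<bar> \<le> (\<Sum>a\<in>S1. \<Sum>b\<in>S2. \<bar>u a b\<bar>)"
proof -
  have "\<bar>payoff1 S1 S2 u p q\<bar> \<le> (\<Sum>a\<in>S1. \<bar>\<Sum>b\<in>S2. p a * q b * u a b\<bar>)"
    unfolding payoff1_def by (rule sum_abs)
  also have "\<dots> \<le> (\<Sum>a\<in>S1. \<Sum>b\<in>S2. \<bar>p a * q b * u a b\<bar>)"
    by (intro sum_mono sum_abs)
  also have "\<dots> \<le> (\<Sum>a\<in>S1. \<Sum>b\<in>S2. \<bar>u a b\<bar>)"
  proof (intro sum_mono)
    fix a b
    have pa: "0 \<le> p a" "p a \<le> 1" using assms mixed_le1[of S1 p a] by (auto simp: mixed_def)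
    have qb: "0 \<le> q b" "q b \<le> 1" using assms mixed_le1[of S2 q b] by (auto simp: mixed_def)
    have "p a * q b \<le> 1" using pa qb by (simp add: mult_le_one)
    moreover have "0 \<le> p a * q b" using pa qb by simp
    ultimately have "p a * q b * \<bar>u a b\<bar> \<le> 1 * \<bar>u a b\<bar>"
      by (intro mult_right_mono) auto
    then show "\<bar>p a * q b * u a b\<bar> \<le> \<bar>u a b\<bar>"
      using pa qb by (simp add: abs_mult)
  qed
  finally show ?thesis .
qed

lemma pure_mixed: "b \<in> S \<Longrightarrow> finite S \<Longrightarrow> pure b \<in> mixed S"
  by (auto simp: mixed_def pure_def)

lemma inf_as_sup1:
  "(INF s\<in>A. payoff1 S1 S2 u p s) = - (SUP s\<in>A. payoff2 S1 S2 u p s)"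
  by (simp add: Inf_real_def payoff2_def image_comp o_def)

lemma inf_as_sup2:
  "(INF s\<in>A. payoff2 S1 S2 u s q) = - (SUP s\<in>A. payoff1 S1 S2 u s q)"
  by (simp add: Inf_real_def payoff2_def image_comp o_def)

theorem proposition4:
  fixes S1 :: "'a set" and S2 :: "'b set" and u :: "'a \<Rightarrow> 'b \<Rightarrow> real"
    and \<epsilon> :: real
    and P1 :: "nat \<Rightarrow> 'a set" and P2 :: "nat \<Rightarrow> 'b set"
    and \<pi>1 :: "nat \<Rightarrow> 'a \<Rightarrow> real" and \<pi>2 :: "nat \<Rightarrow> 'b \<Rightarrow> real"
    and \<beta>1 :: "nat \<Rightarrow> 'a" and \<beta>2 :: "nat \<Rightarrow> 'b"
  assumes fin1: "finite S1" and fin2: "finite S2"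
    and ne1: "S1 \<noteq> {}" and ne2: "S2 \<noteq> {}"
    and eps: "\<epsilon> \<ge> 0"
    and init1: "P1 0 \<noteq> {}" and init2: "P2 0 \<noteq> {}"
    and sub1: "\<And>t. P1 t \<subseteq> S1" and sub2: "\<And>t. P2 t \<subseteq> S2"
    and restr1: "\<And>t. \<pi>1 t \<in> mixed (P1 t)"
    and restr2: "\<And>t. \<pi>2 t \<in> mixed (P2 t)"
    and br1: "\<And>t. \<beta>1 t \<in> S1 \<and>
              (\<forall>\<sigma>\<in>mixed S1. payoff1 S1 S2 u \<sigma> (\<pi>2 t) \<le> payoff1 S1 S2 u (pure (\<beta>1 t)) (\<pi>2 t))"
    and br2: "\<And>t. \<beta>2 t \<in> S2 \<and>
              (\<forall>\<sigma>\<in>mixed S2. payoff2 S1 S2 u (\<pi>1 t) \<sigma> \<le> payoff2 S1 S2 u (\<pi>1 t) (pure (\<beta>2 t)))"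
    and upd1: "\<And>t. P1 (Suc t) = P1 t \<union> {\<beta>1 t}"
    and upd2: "\<And>t. P2 (Suc t) = P2 t \<union> {\<beta>2 t}"
    and approx1: "\<And>t. (INF \<sigma>'\<in>mixed S2. payoff1 S1 S2 u (\<pi>1 t) \<sigma>') \<ge>
                 (SUP \<sigma>\<in>mixed (P1 t). INF \<sigma>'\<in>mixed S2. payoff1 S1 S2 u \<sigma> \<sigma>') - \<epsilon>"
    and approx2: "\<And>t. (INF \<sigma>'\<in>mixed S1. payoff2 S1 S2 u \<sigma>' (\<pi>2 t)) \<ge>
                 (SUP \<sigma>\<in>mixed (P2 t). INF \<sigma>'\<in>mixed S1. payoff2 S1 S2 u \<sigma>' \<sigma>) - \<epsilon>"
  shows "\<forall>t. exploitability S1 S2 u (\<pi>1 (Suc t)) (\<pi>2 (Suc t))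
              \<le> exploitability S1 S2 u (\<pi>1 t) (\<pi>2 t) + 2 * \<epsilon>"
proof
  fix t
  define M where "M = (\<Sum>a\<in>S1. \<Sum>b\<in>S2. \<bar>u a b\<bar>)"
  define A where "A q = (SUP s\<in>mixed S1. payoff1 S1 S2 u s q)" for q
  define B where "B p = (SUP s\<in>mixed S2. payoff2 S1 S2 u p s)" for p
  obtain a0 where a0: "a0 \<in> S1" using ne1 by auto
  obtain b0 where b0: "b0 \<in> S2" using ne2 by auto
  have Blow: "B p \<ge> - M" if p: "p \<in> mixed S1" for p
  proof -
    have bdd: "bdd_above ((\<lambda>s. payoff2 S1 S2 u p s) ` mixed S2)"
      using payoff_bound[OF fin1 fin2 p, where u=u] unfolding payoff2_def M_def
      by (intro bdd_aboveI[where M=M]) (auto simp: M_def abs_le_iff)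
    have "- M \<le> payoff2 S1 S2 u p (pure b0)"
      using payoff_bound[OF fin1 fin2 p pure_mixed[OF b0 fin2], where u=u] unfolding payoff2_def M_def
      by linarith
    also have "\<dots> \<le> B p" unfolding B_def
      by (rule cSUP_upper[OF pure_mixed[OF b0 fin2] bdd])
    finally show ?thesis .
  qed
  have Alow: "A q \<ge> - M" if q: "q \<in> mixed S2" for q
  proof -
    have bdd: "bdd_above ((\<lambda>s. payoff1 S1 S2 u s q) ` mixed S1)"
      using payoff_bound[OF fin1 fin2 _ q, where u=u]
      by (intro bdd_aboveI[where M=M]) (auto simp: M_def abs_le_iff)
    have "- M \<le> payoff1 S1 S2 u (pure a0) q"
      using payoff_bound[OF fin1 fin2 pure_mixed[OF a0 fin1] q, where u=u] unfolding M_def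
      by linarith
    also have "\<dots> \<le> A q" unfolding A_def
      by (rule cSUP_upper[OF pure_mixed[OF a0 fin1] bdd])
    finally show ?thesis .
  qed
  have finP1: "finite (P1 (Suc t))" using sub1 fin1 finite_subset by blast
  have finP2: "finite (P2 (Suc t))" using sub2 fin2 finite_subset by blast
  have m1: "\<pi>1 t \<in> mixed (P1 (Suc t))"
    using mixed_mono[OF finP1 _ restr1[of t]] upd1[of t] by auto
  have m2: "\<pi>2 t \<in> mixed (P2 (Suc t))"
    using mixed_mono[OF finP2 _ restr2[of t]] upd2[of t] by auto
  have sub1m: "p \<in> mixed S1" if "p \<in> mixed (P1 (Suc t))" for p
    using mixed_mono[OF fin1 sub1 that] .
  have sub2m: "q \<in> mixed S2" if "q \<in> mixed (P2 (Suc t))" for q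
    using mixed_mono[OF fin2 sub2 that] .
  have a1: "- B (\<pi>1 (Suc t)) \<ge> (SUP \<sigma>\<in>mixed (P1 (Suc t)). - B \<sigma>) - \<epsilon>"
    using approx1[of "Suc t"] unfolding inf_as_sup1 B_def .
  have a2: "- A (\<pi>2 (Suc t)) \<ge> (SUP \<sigma>\<in>mixed (P2 (Suc t)). - A \<sigma>) - \<epsilon>"
    using approx2[of "Suc t"] unfolding inf_as_sup2 A_def .
  have s1: "- B (\<pi>1 t) \<le> (SUP \<sigma>\<in>mixed (P1 (Suc t)). - B \<sigma>)"
  proof (rule cSUP_upper[OF m1])
    show "bdd_above ((\<lambda>\<sigma>. - B \<sigma>) ` mixed (P1 (Suc t)))"
      using Blow sub1m by (intro bdd_aboveI[where M=M]) force
  qed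
  have s2: "- A (\<pi>2 t) \<le> (SUP \<sigma>\<in>mixed (P2 (Suc t)). - A \<sigma>)"
  proof (rule cSUP_upper[OF m2])
    show "bdd_above ((\<lambda>\<sigma>. - A \<sigma>) ` mixed (P2 (Suc t)))"
      using Alow sub2m by (intro bdd_aboveI[where M=M]) force
  qed
  show "exploitability S1 S2 u (\<pi>1 (Suc t)) (\<pi>2 (Suc t))
              \<le> exploitability S1 S2 u (\<pi>1 t) (\<pi>2 t) + 2 * \<epsilon>"
    unfolding exploitability_def A_def[symmetric] B_def[symmetric]
    using a1 a2 s1 s2 by linarith
qed

end
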